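(* Let $(\Omega,\mathcal{F})$ be a measurable space, $T:\Omega\to\Omega$ measurable, and $V$ a $T$-invariant upper probability. The following are equivalent: (i) $V$ is ergodic; (ii) there exists $Q\in\operatorname{core}(V)\cap\mathcal{M}^e(T)$ such that for every $P\in\operatorname{core}(V)$, $\lim_{n\to\infty}\frac{1}{n}\sum_{i=0}^{n-1}P(B\cap T^{-i}C)=P(B)Q(C)$ for all $B,C\in\mathcal{F}$; (iii) there exists $Q\in\operatorname{core}(V)\cap\mathcal{M}(T)$ such that for every $P\in\operatorname{core}(V)$, $\lim_{n\to\infty}\frac{1}{n}\sum_{i=0}^{n-1}P(B\cap T^{-i}C)=P(B)Q(C)$ for all $B,C\in\mathcal{F}$.
   Context: A capacity is a monotone map $\mu:\mathcal{F}\to[0,1]$ with $\mu(\emptyset)=0,\mu(\Omega)=1$. An upper probability is a capacity $V$ with $V(A)=\max_{P\in\Lambda}P(A)$ for a weak* (setwise convergence) compact set $\Lambda$ of probabilities; $\operatorname{core}(V)$ is the set of finitely additive normalized $P\le V$ (these are probabilities). $V$ is $T$-invariant if $V(T^{-1}A)=V(A)$; $\mathcal{I}=\{A:T^{-1}A=A\}$; $V$ is ergodic if for each $B\in\mathcal{I}$, $V(B)\in\{0,1\}$ and ($V(B)=0$ or $V(B^c)=0$). $\mathcal{M}(T)$: $T$-invariant probabilities; $\mathcal{M}^e(T)$: those with $P(\mathcal{I})\subset\{0,1\}$. *)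

theory Defs
  imports "HOL-Analysis.Analysis"
begin

text \<open>Set functions on a measurable space M are modelled as functions of type
  'a set => real, normalised to be 0 outside sets M.  The space of such functions
  carries the product topology (instance in Function_Topology), i.e. the topology of
  setwise convergence.\<close>

definition fa_prob :: "'a measure \<Rightarrow> ('a set \<Rightarrow> real) \<Rightarrow> bool" where
  "fa_prob M P \<longleftrightarrow>
     (\<forall>A. A \<notin> sets M \<longrightarrow> P A = 0) \<and>
     (\<forall>A\<in>sets M. 0 \<le> P A) \<and> P (space M) = 1 \<and>
     (\<forall>A\<in>sets M. \<forall>B\<in>sets M. A \<inter> B = {} \<longrightarrow> P (A \<union> B) = P A + P B)"

definition is_prob :: "'a measure \<Rightarrow> ('a set \<Rightarrow> real) \<Rightarrow> bool" where
  "is_prob M P \<longleftrightarrow>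
     (\<forall>A. A \<notin> sets M \<longrightarrow> P A = 0) \<and>
     (\<forall>A\<in>sets M. 0 \<le> P A) \<and> P (space M) = 1 \<and>
     (\<forall>F::nat \<Rightarrow> 'a set. range F \<subseteq> sets M \<longrightarrow> disjoint_family F \<longrightarrow>
        (\<lambda>n. P (F n)) sums P (\<Union>n. F n))"

definition upper_prob :: "'a measure \<Rightarrow> ('a set \<Rightarrow> real) \<Rightarrow> bool" where
  "upper_prob M V \<longleftrightarrow>
     (\<exists>\<Lambda>. \<Lambda> \<noteq> {} \<and> compact \<Lambda> \<and> (\<forall>P\<in>\<Lambda>. is_prob M P) \<and>
        (\<forall>A\<in>sets M. (\<exists>P\<in>\<Lambda>. P A = V A) \<and> (\<forall>P\<in>\<Lambda>. P A \<le> V A)))"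

definition core :: "'a measure \<Rightarrow> ('a set \<Rightarrow> real) \<Rightarrow> ('a set \<Rightarrow> real) set" where
  "core M V = {P. fa_prob M P \<and> (\<forall>A\<in>sets M. P A \<le> V A)}"

definition T_invariant :: "'a measure \<Rightarrow> ('a \<Rightarrow> 'a) \<Rightarrow> ('a set \<Rightarrow> real) \<Rightarrow> bool" where
  "T_invariant M T V \<longleftrightarrow> (\<forall>A\<in>sets M. V (T -` A \<inter> space M) = V A)"

definition inv_sets :: "'a measure \<Rightarrow> ('a \<Rightarrow> 'a) \<Rightarrow> 'a set set" where
  "inv_sets M T = {A\<in>sets M. T -` A \<inter> space M = A}"

definition ergodic_cap :: "'a measure \<Rightarrow> ('a \<Rightarrow> 'a) \<Rightarrow> ('a set \<Rightarrow> real) \<Rightarrow> bool" where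
  "ergodic_cap M T V \<longleftrightarrow>
     (\<forall>B\<in>inv_sets M T. (V B = 0 \<or> V B = 1) \<and> (V B = 0 \<or> V (space M - B) = 0))"

definition inv_probs :: "'a measure \<Rightarrow> ('a \<Rightarrow> 'a) \<Rightarrow> ('a set \<Rightarrow> real) set" where
  "inv_probs M T = {P. is_prob M P \<and> T_invariant M T P}"

definition erg_probs :: "'a measure \<Rightarrow> ('a \<Rightarrow> 'a) \<Rightarrow> ('a set \<Rightarrow> real) set" where
  "erg_probs M T = {P\<in>inv_probs M T. \<forall>B\<in>inv_sets M T. P B = 0 \<or> P B = 1}"

definition mixing_avg :: "'a measure \<Rightarrow> ('a \<Rightarrow> 'a) \<Rightarrow> ('a set \<Rightarrow> real) \<Rightarrow> ('a set \<Rightarrow> real) \<Rightarrow> bool" where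
  "mixing_avg M T V Q \<longleftrightarrow>
     (\<forall>P\<in>core M V. \<forall>B\<in>sets M. \<forall>C\<in>sets M.
        (\<lambda>n. (\<Sum>i<n. P (B \<inter> ((T ^^ i) -` C \<inter> space M))) / real n)
          \<longlonglongrightarrow> P B * Q C)"

end

theory Submission
  imports Defs "HOL-Probability.Probability_Measure"
begin


definition mk :: "'a measure \<Rightarrow> ('a set \<Rightarrow> real) \<Rightarrow> 'a measure" where
  "mk M P = measure_of (space M) (sets M) (\<lambda>A. ennreal (P A))"

lemma is_prob_empty: assumes "is_prob M P" shows "P {} = 0"
proof -
  have "(\<lambda>n. P {}) sums P (\<Union>n. {})"
    using assms unfolding is_prob_def by (auto simp: disjoint_family_on_def)
  hence "summable (\<lambda>n::nat. P {})" by (auto simp: sums_iff)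
  thus ?thesis by (simp add: summable_const_iff)
qed

lemma mk_sets[simp]: "sets (mk M P) = sets M"
  unfolding mk_def by (simp add: sets.space_closed)
lemma mk_space[simp]: "space (mk M P) = space M"
  unfolding mk_def by (simp add: space_measure_of_conv)

lemma mk_emeasure: assumes "is_prob M P" "A \<in> sets M"
  shows "emeasure (mk M P) A = ennreal (P A)"
  unfolding mk_def
proof (rule emeasure_measure_of_sigma[OF sets.sigma_algebra_axioms _ _ assms(2)])
  show "positive (sets M) (\<lambda>A. ennreal (P A))"
    using is_prob_empty[OF assms(1)] by (simp add: positive_def)
  show "countably_additive (sets M) (\<lambda>A. ennreal (P A))"
    unfolding countably_additive_def
  proof (intro allI impI)
    fix F :: "nat \<Rightarrow> 'a set" assume h: "range F \<subseteq> sets M" "disjoint_family F" "\<Union> (range F) \<in> sets M"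
    have s: "(\<lambda>n. P (F n)) sums P (\<Union>n. F n)" using assms(1) h unfolding is_prob_def by blast
    have nn: "\<And>i. 0 \<le> P (F i)" using assms(1) h unfolding is_prob_def by blast
    have "0 \<le> P (\<Union>n. F n)" using assms(1) h unfolding is_prob_def by blast
    hence "(\<lambda>n. ennreal (P (F n))) sums ennreal (P (\<Union>n. F n))" using s nn by simp
    thus "(\<Sum>i. ennreal (P (F i))) = ennreal (P (\<Union> (range F)))" by (simp add: sums_iff)
  qed
qed

lemma mk_prob: assumes "is_prob M P" shows "prob_space (mk M P)"
  apply (rule prob_spaceI)
  using mk_emeasure[OF assms sets.top] assms unfolding is_prob_def by simp

lemma mk_measure: assumes "is_prob M P" "A \<in> sets M"
  shows "measure (mk M P) A = P A"
  using mk_emeasure[OF assms] assms unfolding is_prob_def measure_def by simp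

lemma is_prob_fa: assumes "is_prob M P" shows "fa_prob M P"
proof -
  interpret prob_space "mk M P" by (rule mk_prob[OF assms])
  show ?thesis unfolding fa_prob_def
  proof (intro conjI ballI impI allI)
    fix A B assume "A \<in> sets M" "B \<in> sets M" "A \<inter> B = {}"
    thus "P (A \<union> B) = P A + P B"
      using finite_measure_Union[of A B] by (simp add: mk_measure[OF assms])
  qed (use assms in \<open>auto simp: is_prob_def\<close>)
qed

lemma fa_empty: assumes "fa_prob M P" shows "P {} = 0"
  using assms unfolding fa_prob_def by (metis add_cancel_right_right inf.idem sets.empty_sets sup.idem)

lemma fa_diff: assumes "fa_prob M P" "A \<in> sets M" "B \<in> sets M" "A \<subseteq> B"
  shows "P (B - A) = P B - P A"
proof -
  have "P ((B - A) \<union> A) = P (B - A) + P A" using assms unfolding fa_prob_def by blast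
  moreover have "(B - A) \<union> A = B" using assms by auto
  ultimately show ?thesis by simp
qed

lemma fa_mono: assumes "fa_prob M P" "A \<in> sets M" "B \<in> sets M" "A \<subseteq> B"
  shows "P A \<le> P B"
  using fa_diff[OF assms] assms(1,2,3) unfolding fa_prob_def by (metis Diff_subset sets.Diff assms(3) assms(2) diff_ge_0_iff_ge)

lemma fa_nonneg: "fa_prob M P \<Longrightarrow> 0 \<le> P A"
  unfolding fa_prob_def by (cases "A \<in> sets M") auto

lemma fa_le1: assumes "fa_prob M P" shows "P A \<le> 1"
proof (cases "A \<in> sets M")
  case True thus ?thesis using fa_mono[OF assms True sets.top sets.sets_into_space[OF True]] assms
    unfolding fa_prob_def by simp
next
  case False thus ?thesis using assms unfolding fa_prob_def by simp
qed

lemma fa_finite_union: assumes "fa_prob M P" "range F \<subseteq> sets M" "disjoint_family F"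
  shows "P (\<Union>i<n::nat. F i) = (\<Sum>i<n. P (F i))"
proof (induction n)
  case 0 thus ?case using fa_empty[OF assms(1)] by simp
next
  case (Suc n)
  have "(\<Union>i<Suc n. F i) = (\<Union>i<n. F i) \<union> F n" by (auto simp: lessThan_Suc)
  moreover have "(\<Union>i<n. F i) \<inter> F n = {}" using assms(3) unfolding disjoint_family_on_def by (auto, metis disjoint_iff less_irrefl)
  moreover have "(\<Union>i<n. F i) \<in> sets M" using assms(2) by auto
  ultimately show ?case using Suc assms unfolding fa_prob_def by auto
qed



lemma up_core: assumes "upper_prob M V" "P \<in> core M V" shows "fa_prob M P" "\<And>A. A \<in> sets M \<Longrightarrow> P A \<le> V A"
  using assms(2) unfolding core_def by auto

lemma V_bounds: assumes "upper_prob M V" "A \<in> sets M" shows "0 \<le> V A" "V A \<le> 1"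
proof -
  obtain \<Lambda> where L: "\<forall>P\<in>\<Lambda>. is_prob M P" "\<forall>A\<in>sets M. (\<exists>P\<in>\<Lambda>. P A = V A)"
    using assms(1) unfolding upper_prob_def by blast
  then obtain P where "P \<in> \<Lambda>" "P A = V A" using assms(2) by blast
  hence "fa_prob M P" using L is_prob_fa by blast
  thus "0 \<le> V A" "V A \<le> 1" using fa_nonneg fa_le1 \<open>P A = V A\<close> by metis+
qed

lemma V_cont: assumes "upper_prob M V" "range A \<subseteq> sets M" "decseq A" "(\<Inter>n. A n) = {}"
  shows "(\<lambda>n. V (A n)) \<longlonglongrightarrow> 0"
proof -
  obtain \<Lambda> where L: "compact \<Lambda>" "\<forall>P\<in>\<Lambda>. is_prob M P"
     "\<forall>A\<in>sets M. (\<exists>P\<in>\<Lambda>. P A = V A) \<and> (\<forall>P\<in>\<Lambda>. P A \<le> V A)"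
    using assms(1) unfolding upper_prob_def by blast
  have Pc: "(\<lambda>n. P (A n)) \<longlonglongrightarrow> 0" if "P \<in> \<Lambda>" for P
  proof -
    have ip: "is_prob M P" using L that by blast
    interpret prob_space "mk M P" by (rule mk_prob[OF ip])
    have "(\<lambda>n. measure (mk M P) (A n)) \<longlonglongrightarrow> measure (mk M P) (\<Inter>i. A i)"
      by (rule finite_Lim_measure_decseq) (use assms in auto)
    moreover have "measure (mk M P) (A n) = P (A n)" for n using mk_measure[OF ip] assms(2) by auto
    ultimately show ?thesis using assms(4) by simp
  qed
  show ?thesis
  proof (rule LIMSEQ_I)
    fix r :: real assume r: "0 < r"
    define U where "U n = {f :: 'a set \<Rightarrow> real. f (A n) < r}" for n
    have "open (U n)" for n unfolding U_def
      by (rule open_Collect_less) (auto intro: continuous_on_const)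
    moreover have "\<Lambda> \<subseteq> (\<Union>n\<in>UNIV. U n)"
    proof
      fix P assume "P \<in> \<Lambda>"
      from LIMSEQ_D[OF Pc[OF this] r] obtain n where "norm (P (A n)) < r" by auto
      thus "P \<in> (\<Union>n\<in>UNIV. U n)" unfolding U_def by (auto simp: abs_less_iff)
    qed
    ultimately obtain C where C: "finite C" "\<Lambda> \<subseteq> (\<Union>n\<in>C. U n)"
      using compactE_image[OF L(1), of UNIV U] by metis
    define N where "N = Max (insert 0 C)"
    have "norm (V (A n)) < r" if "n \<ge> N" for n
    proof -
      obtain P where P: "P \<in> \<Lambda>" "P (A n) = V (A n)" using L(3) assms(2) by blast
      then obtain k where k: "k \<in> C" "P (A k) < r" using C unfolding U_def by auto
      have "k \<le> n" using k C that unfolding N_def by (meson Max_ge finite_insert insertI2 order_trans)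
      hence "A n \<subseteq> A k" using assms(3) by (simp add: decseq_def)
      have fa: "fa_prob M P" using L P is_prob_fa by blast
      hence "P (A n) \<le> P (A k)" using fa_mono[OF fa _ _ \<open>A n \<subseteq> A k\<close>] assms(2) by auto
      moreover have "0 \<le> P (A n)" using fa_nonneg[OF fa] .
      ultimately show ?thesis using P k by simp
    qed
    thus "\<exists>no. \<forall>n\<ge>no. norm (V (A n) - 0) < r" by auto
  qed
qed

lemma dom_is_prob: assumes "upper_prob M V" "fa_prob M R" "0 < c" "\<forall>A\<in>sets M. c * R A \<le> V A"
  shows "is_prob M R"
proof -
  have "(\<lambda>n. R (F n)) sums R (\<Union>n. F n)" if F: "range F \<subseteq> sets M" "disjoint_family F" for F :: "nat \<Rightarrow> 'a set"
  proof -
  define D where "D n = (\<Union>i. F i) - (\<Union>i<n. F i)" for n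
  have Us: "(\<Union>i. F i) \<in> sets M" using F by auto
  have Ufs: "(\<Union>i<n. F i) \<in> sets M" for n using F by auto
  have Ds: "range D \<subseteq> sets M" unfolding D_def using Us Ufs by auto
  have "decseq D" unfolding D_def decseq_def by auto
  moreover have "(\<Inter>n. D n) = {}" unfolding D_def by auto
  ultimately have VD: "(\<lambda>n. V (D n)) \<longlonglongrightarrow> 0" using V_cont[OF assms(1) Ds] by blast
  have eq: "R (\<Union>i. F i) - (\<Sum>i<n. R (F i)) = R (D n)" for n
  proof -
    have "(\<Union>i<n. F i) \<subseteq> (\<Union>i. F i)" by auto
    thus ?thesis unfolding D_def using fa_diff[OF assms(2) Ufs Us, of n] fa_finite_union[OF assms(2) F, of n] by simp
  qed
  have "(\<lambda>n. R (D n)) \<longlonglongrightarrow> 0"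
  proof (rule real_tendsto_sandwich[of "\<lambda>_. 0" _ _ "\<lambda>n. V (D n) / c"])
    show "\<forall>\<^sub>F n in sequentially. 0 \<le> R (D n)" using fa_nonneg[OF assms(2)] by auto
    show "\<forall>\<^sub>F n in sequentially. R (D n) \<le> V (D n) / c"
      using assms(3,4) Ds by (auto simp: field_simps mult.commute)
    show "(\<lambda>n. V (D n) / c) \<longlonglongrightarrow> 0" using tendsto_divide_zero[OF VD] by simp
  qed simp
  hence "(\<lambda>n. R (\<Union>i. F i) - (R (\<Union>i. F i) - (\<Sum>i<n. R (F i)))) \<longlonglongrightarrow> R (\<Union>i. F i) - 0"
    unfolding eq by (intro tendsto_diff) auto
  thus "(\<lambda>n. R (F n)) sums R (\<Union>n. F n)" unfolding sums_def by simp
  qed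
  thus ?thesis using assms(2) unfolding fa_prob_def is_prob_def by auto
qed



definition SS :: "'a measure \<Rightarrow> ('a set \<Rightarrow> real) \<Rightarrow> real \<Rightarrow> ('a set \<Rightarrow> real) set" where
  "SS M V c = {R. fa_prob M R \<and> (\<forall>A\<in>sets M. c * R A \<le> V A)}"

lemma closed_imp_const: "closed {x. Q x} \<Longrightarrow> closed {x. P \<longrightarrow> Q x}"
  by (cases P) auto

lemma cont_eval: "continuous_on UNIV (\<lambda>f::'a set \<Rightarrow> real. f A)"
  by simp

lemma compact_SS: "compact (SS M V c)"
proof -
  have box: "compact (PiE UNIV (\<lambda>_::'a set. {0..1::real}))"
    using compactin_PiE[of "\<lambda>_. euclidean" UNIV "\<lambda>_::'a set. {0..1::real}"]
    by (simp add: euclidean_product_topology)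
  have sub: "SS M V c = PiE UNIV (\<lambda>_::'a set. {0..1::real}) \<inter> SS M V c"
    unfolding SS_def using fa_nonneg fa_le1 by (auto simp: PiE_def)
  have cl: "closed (SS M V c)"
  proof -
    have "SS M V c = {R. (\<forall>A. A \<notin> sets M \<longrightarrow> R A = 0) \<and>
     (\<forall>A. A \<in> sets M \<longrightarrow> 0 \<le> R A) \<and> R (space M) = 1 \<and>
     (\<forall>A. A \<in> sets M \<longrightarrow> (\<forall>B. B \<in> sets M \<longrightarrow> A \<inter> B = {} \<longrightarrow> R (A \<union> B) = R A + R B)) \<and>
     (\<forall>A. A \<in> sets M \<longrightarrow> c * R A \<le> V A)}"
      unfolding SS_def fa_prob_def by auto
    also have "closed \<dots>"
      by (intro closed_Collect_conj closed_Collect_all closed_imp_const closed_Collect_eq closed_Collect_le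
          continuous_intros cont_eval)
    finally show ?thesis .
  qed
  show ?thesis using compact_Int_closed[OF box cl] sub by simp
qed

lemma cluster_zero:
  fixes \<phi> :: "'b::topological_space \<Rightarrow> real" and X :: "nat \<Rightarrow> 'b"
  assumes "continuous_on UNIV \<phi>" "(\<lambda>n. \<phi> (X n)) \<longlonglongrightarrow> 0"
    "inf (nhds x) F \<noteq> bot" "F \<le> filtermap X sequentially"
  shows "\<phi> x = 0"
proof -
  have "(\<phi> \<longlongrightarrow> \<phi> x) (nhds x)" unfolding tendsto_def
  proof (intro allI impI)
    fix B assume B: "open B" "\<phi> x \<in> B"
    hence "open (\<phi> -` B)" using assms(1) continuous_on_open_vimage[of UNIV \<phi>] by auto
    thus "eventually (\<lambda>y. \<phi> y \<in> B) (nhds x)" using B unfolding eventually_nhds by blast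
  qed
  hence 1: "(\<phi> \<longlongrightarrow> \<phi> x) (inf (nhds x) F)" by (rule tendsto_mono[rotated]) simp
  have "(\<phi> \<longlongrightarrow> 0) (filtermap X sequentially)" using assms(2) by (simp add: filterlim_filtermap)
  hence 2: "(\<phi> \<longlongrightarrow> 0) (inf (nhds x) F)" by (rule tendsto_mono[rotated]) (use assms(4) in \<open>simp add: le_infI2\<close>)
  show ?thesis using tendsto_unique[OF assms(3) 1 2] .
qed

lemma conv_unique:
  fixes X :: "nat \<Rightarrow> 'b::topological_space"
  assumes "compact S" "\<And>n. X n \<in> S"
    "\<And>x F. x \<in> S \<Longrightarrow> inf (nhds x) F \<noteq> bot \<Longrightarrow> F \<le> filtermap X sequentially \<Longrightarrow> x = q"
  shows "X \<longlonglongrightarrow> q"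
  unfolding tendsto_def
proof (intro allI impI, rule ccontr)
  fix U assume U: "open U" "q \<in> U" "\<not> eventually (\<lambda>n. X n \<in> U) sequentially"
  define F0 where "F0 = inf sequentially (principal {n. X n \<notin> U})"
  have "F0 \<noteq> bot"
  proof
    assume "F0 = bot"
    hence "eventually (\<lambda>_. False) F0" by simp
    hence "eventually (\<lambda>n. X n \<in> U) sequentially" unfolding F0_def eventually_inf_principal
      by (auto elim: eventually_mono)
    thus False using U by blast
  qed
  define F where "F = filtermap X F0"
  have Fnb: "F \<noteq> bot" using \<open>F0 \<noteq> bot\<close> unfolding F_def by (simp add: filtermap_bot_iff)
  have "eventually (\<lambda>y. y \<in> S \<inter> - U) F" unfolding F_def F0_def eventually_filtermap eventually_inf_principal
    using assms(2) by auto
  moreover have "compact (S \<inter> - U)" using assms(1) U(1) by (intro compact_Int_closed) auto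
  ultimately obtain x where x: "x \<in> S \<inter> - U" "inf (nhds x) F \<noteq> bot"
    using Fnb unfolding compact_filter by blast
  have "F \<le> filtermap X sequentially" unfolding F_def F0_def by (intro filtermap_mono) simp
  hence "x = q" using assms(3) x by blast
  thus False using x U by blast
qed



lemma meas_funpow: assumes "T \<in> measurable M M" shows "(T ^^ n) \<in> measurable M M"
  by (induction n) (use assms in \<open>auto intro: measurable_comp simp: measurable_ident\<close>)

lemma funpow_space: assumes "T \<in> measurable M M" "x \<in> space M" shows "(T ^^ n) x \<in> space M"
  using measurable_space[OF meas_funpow[OF assms(1)] assms(2)] .

lemma vimage_funpow_Suc: assumes "T \<in> measurable M M"
  shows "(T ^^ Suc n) -` B \<inter> space M = T -` ((T ^^ n) -` B \<inter> space M) \<inter> space M"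
  using measurable_space[OF assms] by (auto simp: funpow_swap1)

lemma emeasure_inv_iter:
  assumes "T \<in> measurable N N" "\<And>B. B \<in> sets N \<Longrightarrow> emeasure N (T -` B \<inter> space N) = emeasure N B"
    "B \<in> sets N"
  shows "emeasure N ((T ^^ n) -` B \<inter> space N) = emeasure N B"
proof (induction n)
  case (Suc n)
  have s: "(T ^^ n) -` B \<inter> space N \<in> sets N" using measurable_sets[OF meas_funpow[OF assms(1)] assms(3)] .
  have "emeasure N ((T ^^ Suc n) -` B \<inter> space N) = emeasure N (T -` ((T ^^ n) -` B \<inter> space N) \<inter> space N)"
    by (simp only: vimage_funpow_Suc[OF assms(1)])
  also have "\<dots> = emeasure N ((T ^^ n) -` B \<inter> space N)" using assms(2)[OF s] .
  finally show ?case using Suc.IH by (rule trans)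
qed (simp add: sets.Int_space_eq2[OF assms(3)])

lemma ae_inv:
  assumes "T \<in> measurable N N" "\<And>B. B \<in> sets N \<Longrightarrow> emeasure N (T -` B \<inter> space N) = emeasure N B"
    "A \<in> sets N" "AE x in N. (x \<in> A \<longleftrightarrow> T x \<in> A)"
  obtains A' where "A' \<in> sets N" "T -` A' \<inter> space N = A'" "emeasure N A' = emeasure N A"
proof -
  obtain E where E: "{x \<in> space N. \<not> (x \<in> A \<longleftrightarrow> T x \<in> A)} \<subseteq> E" "emeasure N E = 0" "E \<in> sets N"
    using AE_E[OF assms(4)] by blast
  define Nn where "Nn = (\<Union>n. (T ^^ n) -` E \<inter> space N)"
  have "(T ^^ n) -` E \<inter> space N \<in> null_sets N" for n
    using emeasure_inv_iter[OF assms(1,2) E(3), of n] E(2,3) measurable_sets[OF meas_funpow[OF assms(1)] E(3)]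
    by auto
  hence Nnull: "Nn \<in> null_sets N" unfolding Nn_def by (rule null_sets_UN)
  have good: "x \<in> A \<longleftrightarrow> (T ^^ n) x \<in> A" if x: "x \<in> space N" "x \<notin> Nn" for x n
  proof (induction n)
    case (Suc n)
    have "(T ^^ n) x \<in> space N" using funpow_space[OF assms(1) x(1)] .
    moreover have "(T ^^ n) x \<notin> E" using x unfolding Nn_def by auto
    ultimately have "(T ^^ n) x \<in> A \<longleftrightarrow> T ((T ^^ n) x) \<in> A" using E(1) by blast
    thus ?case using Suc by simp
  qed simp
  define A' where "A' = {x \<in> space N. eventually (\<lambda>n. (T ^^ n) x \<in> A) sequentially}"
  have A'eq: "A' = (\<Union>m. \<Inter>n\<in>{m..}. (T ^^ n) -` A \<inter> space N)"
    unfolding A'_def eventually_sequentially by auto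
  have "(\<Inter>n\<in>{m..}. (T ^^ n) -` A \<inter> space N) \<in> sets N" for m
    using measurable_sets[OF meas_funpow[OF assms(1)] assms(3)]
    by (intro sets.countable_INT) auto
  hence "A' \<in> sets N" unfolding A'eq by (intro sets.countable_UN) blast
  moreover have "T -` A' \<inter> space N = A'"
  proof -
    have "eventually (\<lambda>n. (T ^^ n) (T x) \<in> A) sequentially \<longleftrightarrow> eventually (\<lambda>n. (T ^^ n) x \<in> A) sequentially" for x
    proof -
      have "(\<lambda>n. (T ^^ n) (T x) \<in> A) = (\<lambda>n. (T ^^ Suc n) x \<in> A)" by (simp add: funpow_swap1)
      thus ?thesis using eventually_sequentially_Suc[of "\<lambda>n. (T ^^ n) x \<in> A"] by simp
    qed
    thus ?thesis unfolding A'_def using measurable_space[OF assms(1)] by auto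
  qed
  moreover have "emeasure N A' = emeasure N A"
  proof (rule emeasure_eq_AE)
    show "AE x in N. (x \<in> A') = (x \<in> A)"
      using AE_not_in[OF Nnull]
    proof (eventually_elim)
      case (elim x)
      show ?case
      proof (cases "x \<in> space N")
        case True
        hence "\<forall>n. x \<in> A \<longleftrightarrow> (T ^^ n) x \<in> A" using good elim by blast
        thus ?thesis unfolding A'_def using True by (cases "x \<in> A") auto
      next
        case False thus ?thesis unfolding A'_def using sets.sets_into_space[OF assms(3)] by auto
      qed
    qed
  qed (use \<open>A' \<in> sets N\<close> assms(3) in auto)
  ultimately show ?thesis using that by blast
qed



lemma lemU_le:
  assumes T: "T \<in> measurable M M"
    and S: "is_prob M S" "T_invariant M T S" "\<forall>B\<in>inv_sets M T. S B = 0 \<or> S B = 1"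
    and R: "is_prob M R" "T_invariant M T R" "\<forall>A\<in>sets M. R A \<le> K * S A"
    and A: "A \<in> sets M"
  shows "S A \<le> R A"
proof -
  define \<mu> where "\<mu> = mk M S"
  define \<nu> where "\<nu> = mk M R"
  interpret mu: prob_space \<mu> unfolding \<mu>_def by (rule mk_prob[OF S(1)])
  interpret nu: prob_space \<nu> unfolding \<nu>_def by (rule mk_prob[OF R(1)])
  have sm[simp]: "sets \<mu> = sets M" "space \<mu> = space M" "sets \<nu> = sets M" "space \<nu> = space M"
    unfolding \<mu>_def \<nu>_def by auto
  have mS: "measure \<mu> B = S B" "emeasure \<mu> B = ennreal (S B)" if "B \<in> sets M" for B
    unfolding \<mu>_def using mk_measure[OF S(1) that] mk_emeasure[OF S(1) that] by auto
  have mR: "measure \<nu> B = R B" "emeasure \<nu> B = ennreal (R B)" if "B \<in> sets M" for B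
    unfolding \<nu>_def using mk_measure[OF R(1) that] mk_emeasure[OF R(1) that] by auto
  have faS: "fa_prob M S" and faR: "fa_prob M R" using is_prob_fa S(1) R(1) by auto
  have Tmu: "T \<in> measurable \<mu> \<mu>" using T measurable_cong_sets[of \<mu> M \<mu> M] by simp
  have ac: "absolutely_continuous \<mu> \<nu>"
    unfolding absolutely_continuous_def
  proof
    fix B assume "B \<in> null_sets \<mu>"
    hence B: "B \<in> sets M" "S B = 0" using mS fa_nonneg[OF faS, of B] by (auto simp: null_sets_def)
    hence "R B = 0" using R(3) fa_nonneg[OF faR, of B] by force
    thus "B \<in> null_sets \<nu>" using B mR by (auto simp: null_sets_def)
  qed
  have sfn: "sigma_finite_measure \<nu>" by (rule nu.sigma_finite_measure_axioms)
  define g where "g x = enn2real (RN_deriv \<mu> \<nu> x)" for x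
  have gmu: "g \<in> borel_measurable \<mu>" unfolding g_def by measurable
  have "borel_measurable \<mu> = borel_measurable M" by (rule measurable_cong_sets) auto
  hence gM: "g \<in> borel_measurable M" using gmu by blast
  have gnn: "0 \<le> g x" for x unfolding g_def by simp
  have key: "R D = (\<integral>x. g x * indicator D x \<partial>\<mu>)" "integrable \<mu> (\<lambda>x. g x * indicator D x)"
    if D: "D \<in> sets M" for D
  proof -
    have "integral\<^sup>L \<nu> (indicator D) = (\<integral>x. g x * indicator D x \<partial>\<mu>)"
      unfolding g_def by (rule mu.RN_deriv_integral[OF sfn ac]) (use D in \<open>auto intro: borel_measurable_indicator\<close>)
    moreover have "integral\<^sup>L \<nu> (indicator D) = R D" using mR D sets.Int_space_eq2[OF D] by simp
    ultimately show "R D = (\<integral>x. g x * indicator D x \<partial>\<mu>)" by simp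
    have "integrable \<nu> (indicator D :: 'a \<Rightarrow> real)"
      using nu.emeasure_finite[of D] D by (simp add: integrable_indicator_iff less_top[symmetric])
    thus "integrable \<mu> (\<lambda>x. g x * indicator D x)"
      unfolding g_def using mu.RN_deriv_integrable[OF sfn ac, of "indicator D"] D borel_measurable_indicator[of D \<mu>] by auto
  qed
  have gsp: "\<And>x. x \<in> space \<mu> \<Longrightarrow> g x * indicator (space M) x = g x" by simp
  have "integrable \<mu> (\<lambda>x. g x * indicator (space M) x) = integrable \<mu> g"
    by (rule Bochner_Integration.integrable_cong) auto
  hence intg: "integrable \<mu> g" using key(2)[OF sets.top] by simp
  have "(\<integral>x. g x * indicator (space M) x \<partial>\<mu>) = (\<integral>x. g x \<partial>\<mu>)"
    by (rule Bochner_Integration.integral_cong) auto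
  hence int1: "(\<integral>x. g x \<partial>\<mu>) = 1"
    using key(1)[OF sets.top] R(1) unfolding is_prob_def by simp
  have invmu: "emeasure \<mu> (T -` B \<inter> space \<mu>) = emeasure \<mu> B" if "B \<in> sets \<mu>" for B
  proof -
    have "T -` B \<inter> space M \<in> sets M" using measurable_sets[OF T] that by simp
    thus ?thesis using mS that S(2) unfolding T_invariant_def by simp
  qed
  have aec: "AE x in \<mu>. c \<le> g x" if c: "0 < c" "c < 1" for c
  proof -
    define Ac where "Ac = {x \<in> space M. g x < c}"
    have Acs: "Ac \<in> sets M" unfolding Ac_def using gM by measurable
    define TA where "TA = T -` Ac \<inter> space M"
    have TAs: "TA \<in> sets M" unfolding TA_def using measurable_sets[OF T Acs] .
    define D1 where "D1 = Ac - TA"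
    define D2 where "D2 = TA - Ac"
    have D1s: "D1 \<in> sets M" and D2s: "D2 \<in> sets M" unfolding D1_def D2_def using Acs TAs by auto
    have IAs: "Ac \<inter> TA \<in> sets M" using Acs TAs by auto
    have e1: "Ac = (Ac \<inter> TA) \<union> D1" "(Ac \<inter> TA) \<inter> D1 = {}" unfolding D1_def by auto
    have e2: "TA = (Ac \<inter> TA) \<union> D2" "(Ac \<inter> TA) \<inter> D2 = {}" unfolding D2_def by auto
    have "S TA = S Ac" "R TA = R Ac" using S(2) R(2) Acs unfolding T_invariant_def TA_def by auto
    moreover have "S Ac = S (Ac \<inter> TA) + S D1" "R Ac = R (Ac \<inter> TA) + R D1"
      using faS faR IAs D1s e1 unfolding fa_prob_def by metis+
    moreover have "S TA = S (Ac \<inter> TA) + S D2" "R TA = R (Ac \<inter> TA) + R D2"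
      using faS faR IAs D2s e2 unfolding fa_prob_def by metis+
    ultimately have SD: "S D1 = S D2" and RD: "R D1 = R D2" by auto
    have ind_int: "integrable \<mu> (indicator D :: 'a \<Rightarrow> real)" if "D \<in> sets M" for D
      using mu.emeasure_finite[of D] that by (simp add: integrable_indicator_iff less_top[symmetric])
    have ind_meas: "(\<integral>x. indicator D x \<partial>\<mu>) = S D" if "D \<in> sets M" for D
      using mS that sets.Int_space_eq2[OF that] by simp
    define I1 where "I1 = (\<integral>x. indicator D1 x * (c - g x) \<partial>\<mu>)"
    define I2 where "I2 = (\<integral>x. indicator D2 x * (g x - c) \<partial>\<mu>)"
    have f1: "(\<lambda>x. indicator D1 x * (c - g x)) = (\<lambda>x. c * indicator D1 x - g x * indicator D1 x)"
      by (auto simp: fun_eq_iff algebra_simps)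
    have f2: "(\<lambda>x. indicator D2 x * (g x - c)) = (\<lambda>x. g x * indicator D2 x - c * indicator D2 x)"
      by (auto simp: fun_eq_iff algebra_simps)
    have int1': "integrable \<mu> (\<lambda>x. indicator D1 x * (c - g x))"
      unfolding f1 using ind_int[OF D1s] key(2)[OF D1s] by auto
    have I1v: "I1 = c * S D1 - R D1" unfolding I1_def f1
      using ind_int[OF D1s] key[OF D1s] ind_meas[OF D1s] by simp
    have I2v: "I2 = R D2 - c * S D2" unfolding I2_def f2
      using ind_int[OF D2s] key[OF D2s] ind_meas[OF D2s] by simp
    have nn1: "0 \<le> indicator D1 x * (c - g x)" for x
      unfolding D1_def Ac_def by (auto simp: indicator_def)
    have nn2: "0 \<le> indicator D2 x * (g x - c)" for x
      unfolding D2_def Ac_def TA_def using measurable_space[OF T] by (auto simp: indicator_def)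
    have "0 \<le> I1" "0 \<le> I2" unfolding I1_def I2_def using nn1 nn2 by (auto intro: integral_nonneg)
    moreover have "I1 + I2 = 0" using I1v I2v SD RD by (simp add: algebra_simps)
    ultimately have "I1 = 0" by simp
    hence "AE x in \<mu>. indicator D1 x * (c - g x) = 0"
      unfolding I1_def using integral_nonneg_eq_0_iff_AE[OF int1'] nn1 by simp
    hence "AE x in \<mu>. x \<notin> D1" by eventually_elim (auto simp: Ac_def D1_def indicator_def split: if_split_asm)
    hence "emeasure \<mu> D1 = 0" using AE_iff_measurable[of D1 \<mu> "\<lambda>x. x \<notin> D1"] D1s sets.sets_into_space[OF D1s]
      by auto
    hence "S D1 = 0" using mS(2)[OF D1s] fa_nonneg[OF faS, of D1] by simp
    hence "emeasure \<mu> D2 = 0" using SD mS(2)[OF D2s] by simp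
    hence "AE x in \<mu>. x \<notin> D2" using AE_not_in[of D2 \<mu>] D2s by (auto simp: null_sets_def)
    hence "AE x in \<mu>. (x \<in> Ac \<longleftrightarrow> T x \<in> Ac)"
      using \<open>AE x in \<mu>. x \<notin> D1\<close> AE_space
    proof (eventually_elim)
      case (elim x)
      thus ?case unfolding D1_def D2_def TA_def Ac_def using measurable_space[OF T] by auto
    qed
    from ae_inv[OF Tmu invmu _ this] Acs obtain A' where
      A': "A' \<in> sets M" "T -` A' \<inter> space M = A'" "emeasure \<mu> A' = emeasure \<mu> Ac" by auto
    have "A' \<in> inv_sets M T" using A' unfolding inv_sets_def by auto
    hence "S A' = 0 \<or> S A' = 1" using S(3) by blast
    moreover have "S A' = S Ac" using A'(3) mS(2)[OF A'(1)] mS(2)[OF Acs] fa_nonneg[OF faS] by simp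
    ultimately have "S Ac = 0 \<or> S Ac = 1" by simp
    moreover have "S Ac \<noteq> 1"
    proof
      assume "S Ac = 1"
      hence "AE x in \<mu>. x \<in> Ac" using mu.AE_in_set_eq_1[of Ac] Acs mS(1)[OF Acs] by simp
      hence "AE x in \<mu>. g x \<le> c" by eventually_elim (auto simp: Ac_def)
      hence "(\<integral>x. g x \<partial>\<mu>) \<le> (\<integral>x. c \<partial>\<mu>)"
        by (intro integral_mono_AE intg) auto
      thus False using int1 c mu.prob_space by simp
    qed
    ultimately have "S Ac = 0" by simp
    hence "emeasure \<mu> Ac = 0" using mS(2)[OF Acs] by simp
    hence "AE x in \<mu>. x \<notin> Ac" using AE_not_in[of Ac \<mu>] Acs by (auto simp: null_sets_def)
    thus ?thesis using AE_space by eventually_elim (auto simp: Ac_def)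
  qed
  have "c * S A \<le> R A" if c: "0 < c" "c < 1" for c
  proof -
    have "(\<integral>x. c * indicator A x \<partial>\<mu>) \<le> (\<integral>x. g x * indicator A x \<partial>\<mu>)"
    proof (rule integral_mono_AE[OF _ key(2)[OF A]])
      have "integrable \<mu> (indicator A :: 'a \<Rightarrow> real)"
        using mu.emeasure_finite[of A] A by (simp add: integrable_indicator_iff less_top[symmetric])
      thus "integrable \<mu> (\<lambda>x. c * indicator A x)" by (rule integrable_mult_right)
      show "AE x in \<mu>. c * indicator A x \<le> g x * indicator A x"
        using aec[OF c] by eventually_elim (auto simp: indicator_def)
    qed
    moreover have "(\<integral>x. c * indicator A x \<partial>\<mu>) = c * S A"
      using mS(1)[OF A] sets.Int_space_eq2[OF A] by simp
    ultimately show ?thesis using key(1)[OF A] sets.Int_space_eq2[OF A] mS(1)[OF A] by simp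
  qed
  thus ?thesis by (rule field_le_mult_one_interval)
qed



lemma lemU:
  assumes T: "T \<in> measurable M M"
    and S: "is_prob M S" "T_invariant M T S" "\<forall>B\<in>inv_sets M T. S B = 0 \<or> S B = 1"
    and R: "is_prob M R" "T_invariant M T R" "\<forall>A\<in>sets M. R A \<le> K * S A"
    and A: "A \<in> sets M"
  shows "R A = S A"
proof -
  have "S A \<le> R A" by (rule lemU_le[OF assms])
  moreover have "S (space M - A) \<le> R (space M - A)" using A by (intro lemU_le[OF T S R]) auto
  moreover have "S (space M - A) = 1 - S A" "R (space M - A) = 1 - R A"
    using fa_diff[OF is_prob_fa[OF S(1)] A sets.top] fa_diff[OF is_prob_fa[OF R(1)] A sets.top]
      sets.sets_into_space[OF A] S(1) R(1) unfolding is_prob_def by auto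
  ultimately show ?thesis by simp
qed

lemma unique_inv:
  assumes T: "T \<in> measurable M M"
    and R1: "is_prob M R1" "T_invariant M T R1" and R2: "is_prob M R2" "T_invariant M T R2"
    and agree: "\<forall>B\<in>inv_sets M T. R1 B = R2 B" and z1: "\<forall>B\<in>inv_sets M T. R1 B = 0 \<or> R1 B = 1"
  shows "R1 = R2"
proof -
  define S where "S A = (R1 A + R2 A) / 2" for A
  have Sp: "is_prob M S" unfolding is_prob_def
  proof (intro conjI allI impI ballI)
    fix F :: "nat \<Rightarrow> 'a set" assume F: "range F \<subseteq> sets M" "disjoint_family F"
    have "(\<lambda>n. R1 (F n)) sums R1 (\<Union>n. F n)" "(\<lambda>n. R2 (F n)) sums R2 (\<Union>n. F n)"
      using R1(1) R2(1) F unfolding is_prob_def by auto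
    from sums_divide[OF sums_add[OF this], of 2]
    show "(\<lambda>n. S (F n)) sums S (\<Union>n. F n)" unfolding S_def .
  qed (use R1(1) R2(1) in \<open>auto simp: is_prob_def S_def\<close>)
  have Si: "T_invariant M T S" using R1(2) R2(2) unfolding T_invariant_def S_def by auto
  have S01: "\<forall>B\<in>inv_sets M T. S B = 0 \<or> S B = 1" using agree z1 unfolding S_def by auto
  have le: "\<forall>A\<in>sets M. R1 A \<le> 2 * S A"
    using R2(1) unfolding S_def is_prob_def by auto
  have eq: "R1 A = S A" if "A \<in> sets M" for A by (rule lemU[OF T Sp Si S01 R1 le that])
  show ?thesis
  proof
    fix A show "R1 A = R2 A"
    proof (cases "A \<in> sets M")
      case True thus ?thesis using eq[OF True] unfolding S_def by simp
    next
      case False thus ?thesis using R1(1) R2(1) unfolding is_prob_def by simp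
    qed
  qed
qed

lemma V_iter:
  assumes T: "T \<in> measurable M M" and V: "T_invariant M T V" and A: "A \<in> sets M"
  shows "V ((T ^^ n) -` A \<inter> space M) = V A"
proof (induction n)
  case 0 thus ?case using sets.Int_space_eq2[OF A] by simp
next
  case (Suc n)
  have s: "(T ^^ n) -` A \<inter> space M \<in> sets M" using measurable_sets[OF meas_funpow[OF T] A] .
  have "V ((T ^^ Suc n) -` A \<inter> space M) = V (T -` ((T ^^ n) -` A \<inter> space M) \<inter> space M)"
    by (simp only: vimage_funpow_Suc[OF T])
  also have "\<dots> = V ((T ^^ n) -` A \<inter> space M)" using V s unfolding T_invariant_def by blast
  finally show ?case using Suc.IH by (rule trans)
qed

definition Xs :: "'a measure \<Rightarrow> ('a \<Rightarrow> 'a) \<Rightarrow> ('a set \<Rightarrow> real) \<Rightarrow> 'a set \<Rightarrow> nat \<Rightarrow> 'a set \<Rightarrow> real" where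
  "Xs M T P B n A = (if A \<in> sets M then
      (\<Sum>i<Suc n. P (B \<inter> ((T ^^ i) -` A \<inter> space M))) / (real (Suc n) * P B) else 0)"

lemma pre_sets: assumes "T \<in> measurable M M" "A \<in> sets M" "B \<in> sets M"
  shows "B \<inter> ((T ^^ i) -` A \<inter> space M) \<in> sets M"
  using measurable_sets[OF meas_funpow[OF assms(1)] assms(2)] assms(3) by auto

lemma Xs_in:
  assumes T: "T \<in> measurable M M" and V: "upper_prob M V" "T_invariant M T V"
    and P: "P \<in> core M V" and B: "B \<in> sets M" "0 < P B"
  shows "Xs M T P B n \<in> SS M V (P B)"
proof -
  have fa: "fa_prob M P" using P unfolding core_def by auto
  have Ple: "P A \<le> V A" if "A \<in> sets M" for A using P that unfolding core_def by auto
  have sp: "B \<inter> ((T ^^ i) -` space M \<inter> space M) = B" for i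
    using sets.sets_into_space[OF B(1)] funpow_space[OF T] by auto
  have "fa_prob M (Xs M T P B n)" unfolding fa_prob_def
  proof (intro conjI allI impI ballI)
    show "Xs M T P B n (space M) = 1" unfolding Xs_def sp using B by simp
  next
    fix A C assume AC: "A \<in> sets M" "C \<in> sets M" "A \<inter> C = {}"
    have "P (B \<inter> ((T ^^ i) -` (A \<union> C) \<inter> space M)) =
          P (B \<inter> ((T ^^ i) -` A \<inter> space M)) + P (B \<inter> ((T ^^ i) -` C \<inter> space M))" for i
    proof -
      have "B \<inter> ((T ^^ i) -` (A \<union> C) \<inter> space M) =
          (B \<inter> ((T ^^ i) -` A \<inter> space M)) \<union> (B \<inter> ((T ^^ i) -` C \<inter> space M))" by auto
      moreover have "(B \<inter> ((T ^^ i) -` A \<inter> space M)) \<inter> (B \<inter> ((T ^^ i) -` C \<inter> space M)) = {}"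
        using AC by auto
      ultimately show ?thesis using fa pre_sets[OF T AC(1) B(1)] pre_sets[OF T AC(2) B(1)]
        unfolding fa_prob_def by metis
    qed
    thus "Xs M T P B n (A \<union> C) = Xs M T P B n A + Xs M T P B n C"
      unfolding Xs_def using AC by (simp add: sum.distrib add_divide_distrib)
  next
    fix A assume A: "A \<in> sets M"
    show "0 \<le> Xs M T P B n A" unfolding Xs_def if_P[OF A]
      by (rule divide_nonneg_pos[OF sum_nonneg[OF fa_nonneg[OF fa]]]) (use B(2) in simp)
  qed (auto simp: Xs_def)
  moreover have "P B * Xs M T P B n A \<le> V A" if A: "A \<in> sets M" for A
  proof -
    have "(\<Sum>i<Suc n. P (B \<inter> ((T ^^ i) -` A \<inter> space M))) \<le> (\<Sum>i<Suc n. V A)"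
    proof (rule sum_mono)
      fix i
      have s: "(T ^^ i) -` A \<inter> space M \<in> sets M" using measurable_sets[OF meas_funpow[OF T] A] .
      have "P (B \<inter> ((T ^^ i) -` A \<inter> space M)) \<le> P ((T ^^ i) -` A \<inter> space M)"
        by (rule fa_mono[OF fa pre_sets[OF T A B(1)] s]) auto
      also have "\<dots> \<le> V ((T ^^ i) -` A \<inter> space M)" using Ple[OF s] .
      also have "\<dots> = V A" using V_iter[OF T V(2) A] .
      finally show "P (B \<inter> ((T ^^ i) -` A \<inter> space M)) \<le> V A" .
    qed
    hence le: "(\<Sum>i<Suc n. P (B \<inter> ((T ^^ i) -` A \<inter> space M))) \<le> real (Suc n) * V A" by simp
    have "P B * Xs M T P B n A = (\<Sum>i<Suc n. P (B \<inter> ((T ^^ i) -` A \<inter> space M))) / real (Suc n)"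
      unfolding Xs_def using A B(2) by (simp del: sum.lessThan_Suc of_nat_Suc)
    also have "\<dots> \<le> V A" using le by (simp del: sum.lessThan_Suc of_nat_Suc add: pos_divide_le_eq mult.commute)
    finally show ?thesis .
  qed
  ultimately show ?thesis unfolding SS_def by auto
qed



lemma erg_val:
  assumes E: "ergodic_cap M T V" and R: "fa_prob M R" "0 < c" "\<forall>A\<in>sets M. c * R A \<le> V A"
    and B: "B \<in> inv_sets M T"
  shows "R B = (if V B = 0 then 0 else 1)"
proof -
  have Bs: "B \<in> sets M" using B unfolding inv_sets_def by auto
  show ?thesis
  proof (cases "V B = 0")
    case True
    hence "c * R B \<le> 0" using R(3) Bs by auto
    hence "R B \<le> 0" using R(2) by (simp add: mult_le_0_iff)
    thus ?thesis using fa_nonneg[OF R(1), of B] True by simp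
  next
    case False
    hence "V (space M - B) = 0" using E B unfolding ergodic_cap_def by blast
    moreover have "space M - B \<in> sets M" using Bs by auto
    hence "c * R (space M - B) \<le> V (space M - B)" using R(3) by blast
    ultimately have "c * R (space M - B) \<le> 0" by simp
    hence "R (space M - B) \<le> 0" using R(2) by (simp add: mult_le_0_iff)
    hence "R (space M - B) = 0" using fa_nonneg[OF R(1), of "space M - B"] by simp
    moreover have "R (space M - B) = R (space M) - R B"
      using fa_diff[OF R(1) Bs sets.top sets.sets_into_space[OF Bs]] .
    ultimately show ?thesis using False R(1) unfolding fa_prob_def by simp
  qed
qed

lemma cluster_inv:
  assumes T: "T \<in> measurable M M" and V: "upper_prob M V" "T_invariant M T V"
    and P: "P \<in> core M V" and B: "B \<in> sets M" "0 < P B"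
    and x: "x \<in> SS M V (P B)" "inf (nhds x) F \<noteq> bot" "F \<le> filtermap (Xs M T P B) sequentially"
  shows "is_prob M x" "T_invariant M T x"
proof -
  have fx: "fa_prob M x" "\<forall>A\<in>sets M. P B * x A \<le> V A" using x(1) unfolding SS_def by auto
  show "is_prob M x" by (rule dom_is_prob[OF V(1) fx(1) B(2) fx(2)])
  have fa: "fa_prob M P" using P unfolding core_def by auto
  show "T_invariant M T x" unfolding T_invariant_def
  proof
    fix C assume C: "C \<in> sets M"
    define TC where "TC = T -` C \<inter> space M"
    have TCs: "TC \<in> sets M" unfolding TC_def using measurable_sets[OF T C] .
    define a where "a i = P (B \<inter> ((T ^^ i) -` C \<inter> space M))" for i
    have a01: "0 \<le> a i" "a i \<le> 1" for i unfolding a_def using fa_nonneg[OF fa] fa_le1[OF fa] by auto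
    have shift: "B \<inter> ((T ^^ i) -` TC \<inter> space M) = B \<inter> ((T ^^ Suc i) -` C \<inter> space M)" for i
      unfolding TC_def using funpow_space[OF T] by auto
    have phi: "Xs M T P B n TC - Xs M T P B n C = (a (Suc n) - a 0) / (real (Suc n) * P B)" for n
    proof -
      have "Xs M T P B n TC - Xs M T P B n C =
         ((\<Sum>i<Suc n. a (Suc i)) - (\<Sum>i<Suc n. a i)) / (real (Suc n) * P B)"
        unfolding Xs_def using TCs C by (simp only: if_True shift a_def diff_divide_distrib)
      also have "(\<Sum>i<Suc n. a (Suc i)) - (\<Sum>i<Suc n. a i) = a (Suc n) - a 0"
        by (simp only: sum_subtractf[symmetric] sum_lessThan_telescope)
      finally show ?thesis .
    qed
    have lim: "(\<lambda>n. Xs M T P B n TC - Xs M T P B n C) \<longlonglongrightarrow> 0"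
      unfolding phi
    proof (rule real_tendsto_sandwich[of "\<lambda>n. - (inverse (P B) * inverse (real (Suc n)))" _ _
          "\<lambda>n. inverse (P B) * inverse (real (Suc n))"])
      have l: "(\<lambda>n. inverse (P B) * inverse (real (Suc n))) \<longlonglongrightarrow> 0"
        using tendsto_mult_right_zero[OF LIMSEQ_inverse_real_of_nat] by simp
      show "(\<lambda>n. inverse (P B) * inverse (real (Suc n))) \<longlonglongrightarrow> 0" by (rule l)
      show "(\<lambda>n. - (inverse (P B) * inverse (real (Suc n)))) \<longlonglongrightarrow> 0" using tendsto_minus[OF l] by simp
      have eq: "(a (Suc n) - a 0) / (real (Suc n) * P B) = (a (Suc n) - a 0) * (inverse (P B) * inverse (real (Suc n)))" for n
        by (simp add: field_simps)
      have pos: "0 \<le> inverse (P B) * inverse (real (Suc n))" for n using B(2) by simp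
      have d1: "-1 \<le> a (Suc n) - a 0" "a (Suc n) - a 0 \<le> 1" for n using a01[of "Suc n"] a01[of 0] by linarith+
      show "\<forall>\<^sub>F n in sequentially. - (inverse (P B) * inverse (real (Suc n))) \<le> (a (Suc n) - a 0) / (real (Suc n) * P B)"
        unfolding eq using mult_right_mono[OF d1(1) pos] by (intro always_eventually allI) simp
      show "\<forall>\<^sub>F n in sequentially. (a (Suc n) - a 0) / (real (Suc n) * P B) \<le> inverse (P B) * inverse (real (Suc n))"
        unfolding eq using mult_right_mono[OF d1(2) pos] by (intro always_eventually allI) simp
    qed
    have "(\<lambda>f. f TC - f C) x = 0"
      by (rule cluster_zero[OF _ lim x(2) x(3)]) (intro continuous_intros cont_eval)
    thus "x (T -` C \<inter> space M) = x C" unfolding TC_def by simp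
  qed
qed



lemma conv_core:
  assumes T: "T \<in> measurable M M" and V: "upper_prob M V" "T_invariant M T V" and E: "ergodic_cap M T V"
    and Q: "Q \<in> core M V" "is_prob M Q" "T_invariant M T Q"
    and P: "P \<in> core M V" and B: "B \<in> sets M" "0 < P B"
  shows "Xs M T P B \<longlonglongrightarrow> Q"
proof (rule conv_unique[OF compact_SS Xs_in[OF T V P B]])
  fix x F assume x: "x \<in> SS M V (P B)" "inf (nhds x) F \<noteq> bot" "F \<le> filtermap (Xs M T P B) sequentially"
  have xp: "is_prob M x" "T_invariant M T x" using cluster_inv[OF T V P B x] by auto
  have fx: "fa_prob M x" "\<forall>A\<in>sets M. P B * x A \<le> V A" using x(1) unfolding SS_def by auto
  have fQ: "fa_prob M Q" "\<forall>A\<in>sets M. 1 * Q A \<le> V A" using Q(1) unfolding core_def by auto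
  have "\<forall>B'\<in>inv_sets M T. x B' = Q B'"
    using erg_val[OF E fx(1) B(2) fx(2)] erg_val[OF E fQ(1) _ fQ(2)] by simp
  moreover have "\<forall>B'\<in>inv_sets M T. x B' = 0 \<or> x B' = 1"
    using erg_val[OF E fx(1) B(2) fx(2)] by simp
  ultimately show "x = Q" using unique_inv[OF T xp Q(2,3)] by blast
qed

lemma mixing:
  assumes T: "T \<in> measurable M M" and V: "upper_prob M V" "T_invariant M T V" and E: "ergodic_cap M T V"
    and Q: "Q \<in> core M V" "is_prob M Q" "T_invariant M T Q"
  shows "mixing_avg M T V Q"
  unfolding mixing_avg_def
proof (intro ballI)
  fix P B C assume P: "P \<in> core M V" and B: "B \<in> sets M" and C: "C \<in> sets M"
  have fa: "fa_prob M P" using P unfolding core_def by auto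
  define u where "u n = (\<Sum>i<n. P (B \<inter> ((T ^^ i) -` C \<inter> space M))) / real n" for n
  show "(\<lambda>n. (\<Sum>i<n. P (B \<inter> ((T ^^ i) -` C \<inter> space M))) / real n) \<longlonglongrightarrow> P B * Q C"
    unfolding u_def[symmetric]
  proof (cases "P B = 0")
    case True
    have "P (B \<inter> ((T ^^ i) -` C \<inter> space M)) = 0" for i
      using fa_mono[OF fa pre_sets[OF T C B] B, of i] fa_nonneg[OF fa, of "B \<inter> ((T ^^ i) -` C \<inter> space M)"] True
      by auto
    hence "u = (\<lambda>_. 0)" unfolding u_def by (auto simp: fun_eq_iff)
    thus "u \<longlonglongrightarrow> P B * Q C" using True by simp
  next
    case False
    hence PB: "0 < P B" using fa_nonneg[OF fa, of B] by simp
    have "(\<lambda>n. (\<lambda>f. f C) (Xs M T P B n)) \<longlonglongrightarrow> (\<lambda>f. f C) Q"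
      by (rule continuous_on_tendsto_compose[OF cont_eval conv_core[OF T V E Q P B PB]]) auto
    hence "(\<lambda>n. P B * Xs M T P B n C) \<longlonglongrightarrow> P B * Q C" by (intro tendsto_mult_left) simp
    moreover have "P B * Xs M T P B n C = u (Suc n)" for n
      unfolding Xs_def u_def using C PB by (simp del: sum.lessThan_Suc of_nat_Suc)
    ultimately have "(\<lambda>n. u (Suc n)) \<longlonglongrightarrow> P B * Q C" by simp
    thus "u \<longlonglongrightarrow> P B * Q C" by (rule LIMSEQ_imp_Suc)
  qed
qed

lemma exists_Q:
  assumes T: "T \<in> measurable M M" and V: "upper_prob M V" "T_invariant M T V" and E: "ergodic_cap M T V"
  obtains Q where "Q \<in> core M V" "is_prob M Q" "T_invariant M T Q" "Q \<in> erg_probs M T"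
proof -
  obtain \<Lambda> where L: "\<Lambda> \<noteq> {}" "\<forall>P\<in>\<Lambda>. is_prob M P" "\<forall>A\<in>sets M. (\<forall>P\<in>\<Lambda>. P A \<le> V A)"
    using V(1) unfolding upper_prob_def by blast
  then obtain P0 where P0: "P0 \<in> \<Lambda>" by blast
  have P0p: "is_prob M P0" using L P0 by blast
  have P0c: "P0 \<in> core M V" using P0p is_prob_fa L P0 unfolding core_def by blast
  have P0s: "0 < P0 (space M)" using P0p unfolding is_prob_def by simp
  define F where "F = filtermap (Xs M T P0 (space M)) sequentially"
  have "F \<noteq> bot" unfolding F_def by (simp add: filtermap_bot_iff)
  moreover have "eventually (\<lambda>x. x \<in> SS M V (P0 (space M))) F"
    unfolding F_def eventually_filtermap using Xs_in[OF T V P0c sets.top P0s] by simp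
  ultimately obtain x where x: "x \<in> SS M V (P0 (space M))" "inf (nhds x) F \<noteq> bot"
    using compact_SS unfolding compact_filter by blast
  have xp: "is_prob M x" "T_invariant M T x"
    using cluster_inv[OF T V P0c sets.top P0s x(1,2)] unfolding F_def by auto
  have fx: "fa_prob M x" "\<forall>A\<in>sets M. 1 * x A \<le> V A" using x(1) P0p unfolding SS_def is_prob_def by auto
  have xc: "x \<in> core M V" using fx unfolding core_def by auto
  have "x \<in> erg_probs M T"
    using xp erg_val[OF E fx(1) _ fx(2)] unfolding erg_probs_def inv_probs_def by simp
  thus ?thesis using that xc xp by blast
qed



lemma inv_iter_set: assumes T: "T \<in> measurable M M" and B: "B \<in> inv_sets M T"
  shows "(T ^^ i) -` B \<inter> space M = B"
proof (induction i)
  case 0 thus ?case using B sets.sets_into_space unfolding inv_sets_def by auto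
next
  case (Suc i)
  have "(T ^^ Suc i) -` B \<inter> space M = T -` ((T ^^ i) -` B \<inter> space M) \<inter> space M"
    by (rule vimage_funpow_Suc[OF T])
  also have "\<dots> = B" using Suc B unfolding inv_sets_def by simp
  finally show ?case .
qed

lemma compl_inv: assumes T: "T \<in> measurable M M" and B: "B \<in> inv_sets M T"
  shows "space M - B \<in> inv_sets M T"
  using B measurable_space[OF T] unfolding inv_sets_def by auto

lemma avg_lim:
  assumes T: "T \<in> measurable M M" and mix: "mixing_avg M T V Q" and P: "P \<in> core M V"
    and B1: "B1 \<in> inv_sets M T" and B2: "B2 \<in> inv_sets M T"
  shows "P (B1 \<inter> B2) = P B1 * Q B2"
proof -
  have s: "B1 \<in> sets M" "B2 \<in> sets M" using B1 B2 unfolding inv_sets_def by auto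
  have lim: "(\<lambda>n. (\<Sum>i<n. P (B1 \<inter> ((T ^^ i) -` B2 \<inter> space M))) / real n) \<longlonglongrightarrow> P B1 * Q B2"
    using mix P s unfolding mixing_avg_def by blast
  have eq: "(\<lambda>n. (\<Sum>i<n. P (B1 \<inter> ((T ^^ i) -` B2 \<inter> space M))) / real n) = (\<lambda>n. real n * P (B1 \<inter> B2) / real n)"
    using inv_iter_set[OF T B2] by simp
  have "(\<lambda>n. real (Suc n) * P (B1 \<inter> B2) / real (Suc n)) \<longlonglongrightarrow> P (B1 \<inter> B2)"
    by (simp del: of_nat_Suc)
  hence "(\<lambda>n. real n * P (B1 \<inter> B2) / real n) \<longlonglongrightarrow> P (B1 \<inter> B2)" by (rule LIMSEQ_imp_Suc)
  thus ?thesis using lim unfolding eq using LIMSEQ_unique by blast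
qed

lemma V_att: assumes "upper_prob M V" "A \<in> sets M" shows "\<exists>P\<in>core M V. P A = V A"
proof -
  obtain \<Lambda> where L: "\<forall>P\<in>\<Lambda>. is_prob M P" "\<forall>A\<in>sets M. (\<exists>P\<in>\<Lambda>. P A = V A) \<and> (\<forall>P\<in>\<Lambda>. P A \<le> V A)"
    using assms(1) unfolding upper_prob_def by blast
  then obtain P where "P \<in> \<Lambda>" "P A = V A" using assms(2) by blast
  moreover have "P \<in> core M V" using L \<open>P \<in> \<Lambda>\<close> is_prob_fa unfolding core_def by blast
  ultimately show ?thesis by blast
qed

lemma iii_i:
  assumes T: "T \<in> measurable M M" and V: "upper_prob M V"
    and Q: "Q \<in> core M V" and mix: "mixing_avg M T V Q"
  shows "ergodic_cap M T V"
  unfolding ergodic_cap_def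
proof
  fix B assume B: "B \<in> inv_sets M T"
  define Bc where "Bc = space M - B"
  have Bc: "Bc \<in> inv_sets M T" unfolding Bc_def by (rule compl_inv[OF T B])
  have Bs: "B \<in> sets M" "Bc \<in> sets M" using B Bc unfolding inv_sets_def by auto
  have fQ: "fa_prob M Q" using Q unfolding core_def by auto
  have QB: "Q B = Q B * Q B" using avg_lim[OF T mix Q B B] by simp
  have QBc: "Q Bc = 1 - Q B" using fa_diff[OF fQ Bs(1) sets.top sets.sets_into_space[OF Bs(1)]] fQ
    unfolding Bc_def fa_prob_def by simp
  have dis: "B \<inter> Bc = {}" "Bc \<inter> B = {}" unfolding Bc_def by auto
  have z1: "P Bc * Q B = 0" if "P \<in> core M V" for P
    using avg_lim[OF T mix that Bc B] dis fa_empty[of M P] that unfolding core_def by auto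
  have z2: "P B * Q Bc = 0" if "P \<in> core M V" for P
    using avg_lim[OF T mix that B Bc] dis fa_empty[of M P] that unfolding core_def by auto
  have "Q B = 0 \<or> Q B = 1" using QB by (metis mult_cancel_right1 mult_eq_0_iff)
  thus "(V B = 0 \<or> V B = 1) \<and> (V B = 0 \<or> V (space M - B) = 0)"
  proof
    assume "Q B = 0"
    hence "\<forall>P\<in>core M V. P B = 0" using z2 QBc by simp
    hence "V B = 0" using V_att[OF V Bs(1)] by auto
    thus ?thesis by simp
  next
    assume q1: "Q B = 1"
    hence "\<forall>P\<in>core M V. P Bc = 0" using z1 by simp
    hence "V Bc = 0" using V_att[OF V Bs(2)] by auto
    moreover have "V B = 1" using q1 Q Bs V_bounds[OF V Bs(1)] unfolding core_def by force
    ultimately show ?thesis unfolding Bc_def by simp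
  qed
qed

theorem theorem4p4:
  fixes M :: "'a measure" and T :: "'a \<Rightarrow> 'a" and V :: "'a set \<Rightarrow> real"
  assumes "T \<in> measurable M M"
    and "upper_prob M V"
    and "T_invariant M T V"
  shows "(ergodic_cap M T V \<longleftrightarrow>
            (\<exists>Q\<in>core M V \<inter> erg_probs M T. mixing_avg M T V Q))
       \<and> (ergodic_cap M T V \<longleftrightarrow>
            (\<exists>Q\<in>core M V \<inter> inv_probs M T. mixing_avg M T V Q))"
proof -
  have i_ii: "\<exists>Q\<in>core M V \<inter> erg_probs M T. mixing_avg M T V Q" if E: "ergodic_cap M T V"
  proof -
    obtain Q where Q: "Q \<in> core M V" "is_prob M Q" "T_invariant M T Q" "Q \<in> erg_probs M T"
      using exists_Q[OF assms E] by blast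
    thus ?thesis using mixing[OF assms E Q(1-3)] by blast
  qed
  have ii_iii: "\<exists>Q\<in>core M V \<inter> inv_probs M T. mixing_avg M T V Q"
    if "\<exists>Q\<in>core M V \<inter> erg_probs M T. mixing_avg M T V Q"
    using that unfolding erg_probs_def by blast
  have iii_i': "ergodic_cap M T V" if "\<exists>Q\<in>core M V \<inter> inv_probs M T. mixing_avg M T V Q"
    using that iii_i[OF assms(1,2)] by blast
  show ?thesis using i_ii ii_iii iii_i' by blast
qed

end
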